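(* Let $n$ be a positive integer, $k$ an integer with $0\le k\le n$, and $0<\phi<\infty$, and let $R\sim \mathrm{Spillage}(n,k,\phi)$. For integers $\ell\ge 0$ set $H_\ell = \phi^\ell\, S(n-\ell,k,\phi)/S(n,k,\phi)$. Then $$\mathbb{E}(R) = (n-k) - nH_1,\qquad \mathbb{V}(R) = nH_1 - n^2H_1^2 + n(n-1)H_2,$$ and, whenever $\mathbb{V}(R)>0$ (so that skewness and kurtosis are defined), $$\mathrm{Skew}(R) = \frac{-nH_1 + 3n^2H_1^2 - 3n(n-1)H_2 - 2n^3H_1^3 + 3n^2(n-1)H_1H_2 - n(n-1)(n-2)H_3}{[nH_1 - n^2H_1^2 + n(n-1)H_2]^{3/2}},$$ $$\mathrm{Kurt}(R) = 3 + \frac{\begin{aligned}&nH_1 - 7n^2H_1^2 + 7n(n-1)H_2 + 12n^3H_1^3 - 18n^2(n-1)H_1H_2 + 6n(n-1)(n-2)H_3\\ &- 6n^4H_1^4 + 12n^3(n-1)H_1^2H_2 - 3n^2(n-1)^2H_2^2 - 4n^2(n-1)(n-2)H_1H_3 + n(n-1)(n-2)(n-3)H_4\end{aligned}}{[nH_1 - n^2H_1^2 + n(n-1)H_2]^2}.$$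
   Context: $S(j,k)$ denotes the (central) Stirling numbers of the second kind. The noncentral Stirling numbers of the second kind are $S(n,k,\phi) = \sum_{r=0}^{n-k}\binom{n}{k+r}\phi^{n-k-r}S(k+r,k)$, with $S(n',k,\phi)=0$ for $n'<k$. The spillage distribution $\mathrm{Spillage}(n,k,\phi)$ is the distribution on $\{0,\dots,n-k\}$ with mass function $\mathrm{Spillage}(r\mid n,k,\phi) = \binom{n}{k+r}\phi^{n-k-r}S(k+r,k)/S(n,k,\phi)$. Skewness is $\mathbb{E}[(R-\mathbb{E}R)^3]/\mathbb{V}(R)^{3/2}$ and kurtosis is $\mathbb{E}[(R-\mathbb{E}R)^4]/\mathbb{V}(R)^2$. *)

theory Defs
  imports Complex_Main "HOL-Combinatorics.Stirling"
begin

(* Noncentral Stirling numbers of the second kind S(n,k,phi).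
   For n < k the sum collapses to binom(n,k) * S(k,k) = 0, matching the convention. *)
definition stirling_nc :: "nat \<Rightarrow> nat \<Rightarrow> real \<Rightarrow> real" where
  "stirling_nc n k \<phi> =
     (\<Sum>r = 0..n - k. real (n choose (k + r)) * \<phi> ^ (n - k - r) * real (Stirling (k + r) k))"

definition spillage_pmf :: "nat \<Rightarrow> nat \<Rightarrow> real \<Rightarrow> nat \<Rightarrow> real" where
  "spillage_pmf n k \<phi> r =
     (if r \<le> n - k then real (n choose (k + r)) * \<phi> ^ (n - k - r) * real (Stirling (k + r) k)
                          / stirling_nc n k \<phi>
      else 0)"

definition spillage_mean :: "nat \<Rightarrow> nat \<Rightarrow> real \<Rightarrow> real" where
  "spillage_mean n k \<phi> = (\<Sum>r = 0..n - k. real r * spillage_pmf n k \<phi> r)"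

definition spillage_cmoment :: "nat \<Rightarrow> nat \<Rightarrow> real \<Rightarrow> nat \<Rightarrow> real" where
  "spillage_cmoment n k \<phi> j =
     (\<Sum>r = 0..n - k. (real r - spillage_mean n k \<phi>) ^ j * spillage_pmf n k \<phi> r)"

definition spillage_var :: "nat \<Rightarrow> nat \<Rightarrow> real \<Rightarrow> real" where
  "spillage_var n k \<phi> = spillage_cmoment n k \<phi> 2"

definition spillage_skew :: "nat \<Rightarrow> nat \<Rightarrow> real \<Rightarrow> real" where
  "spillage_skew n k \<phi> = spillage_cmoment n k \<phi> 3 / spillage_var n k \<phi> powr (3/2)"

definition spillage_kurt :: "nat \<Rightarrow> nat \<Rightarrow> real \<Rightarrow> real" where
  "spillage_kurt n k \<phi> = spillage_cmoment n k \<phi> 4 / (spillage_var n k \<phi>)\<^sup>2"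

(* H_l = phi^l S(n-l,k,phi) / S(n,k,phi), with S(n',k,phi) = 0 whenever n' < k
   (this includes negative n' = n - l when l > n). *)
definition spillage_H :: "nat \<Rightarrow> nat \<Rightarrow> real \<Rightarrow> nat \<Rightarrow> real" where
  "spillage_H n k \<phi> l =
     (if n < l + k then 0 else \<phi> ^ l * stirling_nc (n - l) k \<phi> / stirling_nc n k \<phi>)"

end

theory Submission
  imports Defs
begin

lemma choose_ff_nat:
  "(n choose j) * (\<Prod>i<l. n - j - i) = (\<Prod>i<l. n - i) * ((n - l) choose j)"
proof (induction l)
  case 0 then show ?case by simp
next
  case (Suc l)
  have e: "(n - l - j) * ((n - l) choose j) = (n - l) * ((n - l - 1) choose j)"
    by (rule binomial_absorb_comp)
  have "(n choose j) * (\<Prod>i<Suc l. n - j - i) = ((n choose j) * (\<Prod>i<l. n - j - i)) * (n - l - j)"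
    by (simp add: prod.lessThan_Suc mult_ac add.commute)
  also have "\<dots> = (\<Prod>i<l. n - i) * ((n - l - j) * ((n - l) choose j))"
    using Suc.IH by (simp only: mult_ac)
  also have "\<dots> = (\<Prod>i<Suc l. n - i) * ((n - Suc l) choose j)"
    unfolding e by (simp add: prod.lessThan_Suc mult_ac)
  finally show ?case .
qed

lemma real_ff:
  "real (\<Prod>i<l. a - i) = (\<Prod>i<l. real a - real i)"
proof (cases "l \<le> a")
  case True
  then show ?thesis by (auto simp: of_nat_prod of_nat_diff intro!: prod.cong)
next
  case False
  then have "a \<in> {..<l}" by simp
  have "(\<Prod>i<l. a - i) = 0"
    by (rule prod_zero) (use \<open>a \<in> {..<l}\<close> in auto)
  moreover have "(\<Prod>i<l. real a - real i) = 0"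
    by (rule prod_zero) (use \<open>a \<in> {..<l}\<close> in auto)
  ultimately show ?thesis by (metis of_nat_0)
qed

lemma nc_pos:
  assumes "k \<le> n" "0 < \<phi>"
  shows "stirling_nc n k \<phi> > 0"
proof -
  have "0 < real (n choose (k + 0)) * \<phi> ^ (n - k - 0) * real (Stirling (k + 0) k)"
    using assms by simp
  also have "\<dots> \<le> stirling_nc n k \<phi>"
    unfolding stirling_nc_def
    by (rule member_le_sum) (use assms in auto)
  finally show ?thesis .
qed

lemma G_lemma:
  assumes "k \<le> n" "0 < \<phi>"
  shows "(\<Sum>r=0..n-k. (\<Prod>i<l. real (n-k-r) - real i) * spillage_pmf n k \<phi> r)
         = (\<Prod>i<l. real n - real i) * spillage_H n k \<phi> l"
proof -
  define T where "T = stirling_nc n k \<phi>"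
  have Tpos: "T > 0" unfolding T_def using nc_pos assms by blast
  define X where "X r = real ((n-l) choose (k+r)) * \<phi>^(n-k-r) * real (Stirling (k+r) k)" for r
  have c: "real (\<Prod>i<l. n - (k + r) - i) * real (n choose (k+r)) = real (\<Prod>i<l. n - i) * real ((n-l) choose (k+r))" for r
    using arg_cong[OF choose_ff_nat[of n "k+r" l], of real] by (simp only: of_nat_mult mult_ac)
  have 1: "(\<Prod>i<l. real (n-k-r) - real i) * spillage_pmf n k \<phi> r = real (\<Prod>i<l. n - i) / T * X r"
    if "r \<in> {0..n-k}" for r
  proof -
    have "(\<Prod>i<l. real (n-k-r) - real i) = real (\<Prod>i<l. n - (k + r) - i)"
      using real_ff[where l=l and a="n-k-r"] by (simp add: diff_diff_add)
    then show ?thesis using that c[of r]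
      unfolding spillage_pmf_def X_def T_def
      by (simp add: field_simps)
  qed
  have "(\<Sum>r=0..n-k. (\<Prod>i<l. real (n-k-r) - real i) * spillage_pmf n k \<phi> r)
        = real (\<Prod>i<l. n - i) / T * (\<Sum>r=0..n-k. X r)"
    unfolding sum_distrib_left by (rule sum.cong[OF refl 1])
  also have "\<dots> = (\<Prod>i<l. real n - real i) * spillage_H n k \<phi> l"
  proof (cases "l + k \<le> n")
    case True
    have "(\<Sum>r=0..n-k. X r) = (\<Sum>r=0..n-l-k. X r)"
      by (rule sum.mono_neutral_right) (auto simp: X_def)
    also have "\<dots> = \<phi>^l * stirling_nc (n-l) k \<phi>"
      unfolding stirling_nc_def sum_distrib_left
    proof (rule sum.cong)
      fix r assume "r \<in> {0..n-l-k}"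
      then have "n-k-r = l + (n-l-k-r)" using True by auto
      then show "X r = \<phi> ^ l * (real (n - l choose (k + r)) * \<phi> ^ (n - l - k - r) * real (Stirling (k + r) k))"
        unfolding X_def by (simp add: power_add)
    qed simp
    finally show ?thesis using True real_ff[where l=l and a=n]
      unfolding spillage_H_def T_def by simp
  next
    case False
    show ?thesis
    proof (cases "n < l")
      case True
      then have "n \<in> {..<l}" by simp
      have "(\<Prod>i<l. n - i) = 0"
        by (rule prod_zero) (use \<open>n \<in> {..<l}\<close> in auto)
      then show ?thesis using False unfolding spillage_H_def by simp
    next
      case nl: False
      then have "(\<Sum>r=0..n-k. X r) = 0" using False by (auto simp: X_def intro!: sum.neutral)
      then show ?thesis using False unfolding spillage_H_def by simp
    qed
  qed
  finally show ?thesis .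
qed

lemma lin5:
  fixes a0 a1 a2 a3 a4 :: real
  shows "(\<Sum>r\<in>A. a0*f0 r + a1*f1 r + a2*f2 r + a3*f3 r + a4*f4 r)
   = a0*sum f0 A + a1*sum f1 A + a2*sum f2 A + a3*sum f3 A + a4*sum f4 A"
  by (simp add: sum.distrib sum_distrib_left[symmetric])

theorem theorem2:
  fixes n k :: nat and \<phi> :: real
  assumes "0 < n" and "k \<le> n" and "0 < \<phi>"
  defines "H \<equiv> spillage_H n k \<phi>"
  shows "(spillage_mean n k \<phi> = real (n - k) - real n * H 1) \<and>
      (spillage_var n k \<phi> = real n * H 1 - (real n)\<^sup>2 * (H 1)\<^sup>2 + real n * (real n - 1) * H 2) \<and>
      (spillage_var n k \<phi> > 0 \<longrightarrow>
           spillage_skew n k \<phi> =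
             (- real n * H 1 + 3 * (real n)\<^sup>2 * (H 1)\<^sup>2 - 3 * real n * (real n - 1) * H 2
              - 2 * (real n)^3 * (H 1)^3 + 3 * (real n)\<^sup>2 * (real n - 1) * H 1 * H 2
              - real n * (real n - 1) * (real n - 2) * H 3)
             / (real n * H 1 - (real n)\<^sup>2 * (H 1)\<^sup>2 + real n * (real n - 1) * H 2) powr (3/2)) \<and>
      (spillage_var n k \<phi> > 0 \<longrightarrow>
           spillage_kurt n k \<phi> = 3 +
             (real n * H 1 - 7 * (real n)\<^sup>2 * (H 1)\<^sup>2 + 7 * real n * (real n - 1) * H 2
              + 12 * (real n)^3 * (H 1)^3 - 18 * (real n)\<^sup>2 * (real n - 1) * H 1 * H 2
              + 6 * real n * (real n - 1) * (real n - 2) * H 3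
              - 6 * (real n)^4 * (H 1)^4 + 12 * (real n)^3 * (real n - 1) * (H 1)\<^sup>2 * H 2
              - 3 * (real n)\<^sup>2 * (real n - 1)\<^sup>2 * (H 2)\<^sup>2
              - 4 * (real n)\<^sup>2 * (real n - 1) * (real n - 2) * H 1 * H 3
              + real n * (real n - 1) * (real n - 2) * (real n - 3) * H 4)
             / (real n * H 1 - (real n)\<^sup>2 * (H 1)\<^sup>2 + real n * (real n - 1) * H 2)\<^sup>2)"
proof -
  define m where "m = n - k"
  define p where "p = spillage_pmf n k \<phi>"
  define M where "M r = real (m - r)" for r
  define P0 where "P0 = p"
  define P1 where "P1 r = M r * p r" for r
  define P2 where "P2 r = M r * (M r - 1) * p r" for r
  define P3 where "P3 r = M r * (M r - 1) * (M r - 2) * p r" for r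
  define P4 where "P4 r = M r * (M r - 1) * (M r - 2) * (M r - 3) * p r" for r
  have T: "stirling_nc n k \<phi> > 0" using nc_pos assms by blast
  have g0: "sum P0 {0..m} = 1"
    using G_lemma[of k n \<phi> 0] assms T unfolding P0_def p_def m_def H_def spillage_H_def by simp
  have g1: "sum P1 {0..m} = real n * H 1"
    using G_lemma[of k n \<phi> 1] assms unfolding P1_def p_def m_def H_def M_def by simp
  have g2: "sum P2 {0..m} = real n * (real n - 1) * H 2"
    using G_lemma[of k n \<phi> 2] assms unfolding P2_def p_def m_def H_def M_def
    by (simp add: eval_nat_numeral prod.lessThan_Suc mult_ac)
  have g3: "sum P3 {0..m} = real n * (real n - 1) * (real n - 2) * H 3"
    using G_lemma[of k n \<phi> 3] assms unfolding P3_def p_def m_def H_def M_def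
    by (simp add: eval_nat_numeral prod.lessThan_Suc mult_ac)
  have g4: "sum P4 {0..m} = real n * (real n - 1) * (real n - 2) * (real n - 3) * H 4"
    using G_lemma[of k n \<phi> 4] assms unfolding P4_def p_def m_def H_def M_def
    by (simp add: eval_nat_numeral prod.lessThan_Suc mult_ac)
  define c where "c = real n * H 1"
  have mean: "spillage_mean n k \<phi> = real m - c"
  proof -
    have "spillage_mean n k \<phi> = (\<Sum>r\<in>{0..m}. real m * P0 r + (-1) * P1 r + 0 * P2 r + 0 * P3 r + 0 * P4 r)"
      unfolding spillage_mean_def m_def[symmetric] p_def[symmetric]
      by (rule sum.cong) (auto simp: P0_def P1_def M_def of_nat_diff algebra_simps)
    also have "\<dots> = real m - c" unfolding lin5 g0 g1 c_def by simp
    finally show ?thesis .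
  qed
  have cm: "spillage_cmoment n k \<phi> j = (\<Sum>r\<in>{0..m}. (c - M r) ^ j * p r)" for j
    unfolding spillage_cmoment_def m_def[symmetric] p_def[symmetric] mean
    by (rule sum.cong) (auto simp: M_def of_nat_diff algebra_simps)
  have cm2: "spillage_cmoment n k \<phi> 2 = c\<^sup>2 + (1 - 2*c) * c + real n * (real n - 1) * H 2"
  proof -
    have "spillage_cmoment n k \<phi> 2 = (\<Sum>r\<in>{0..m}. c\<^sup>2 * P0 r + (1 - 2*c) * P1 r + 1 * P2 r + 0 * P3 r + 0 * P4 r)"
      unfolding cm by (rule sum.cong) (auto simp: P0_def P1_def P2_def power2_eq_square algebra_simps)
    then show ?thesis unfolding lin5 g0 g1 g2 c_def by simp
  qed
  have cm3: "spillage_cmoment n k \<phi> 3 = c^3 + (-3*c\<^sup>2+3*c-1) * c + (3*c-3) * (real n * (real n - 1) * H 2)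
     - real n * (real n - 1) * (real n - 2) * H 3"
  proof -
    have "spillage_cmoment n k \<phi> 3 = (\<Sum>r\<in>{0..m}. c^3 * P0 r + (-3*c\<^sup>2+3*c-1) * P1 r + (3*c-3) * P2 r + (-1) * P3 r + 0 * P4 r)"
      unfolding cm by (rule sum.cong) (auto simp: P0_def P1_def P2_def P3_def power2_eq_square power3_eq_cube algebra_simps)
    then show ?thesis unfolding lin5 g0 g1 g2 g3 c_def by simp
  qed
  have cm4: "spillage_cmoment n k \<phi> 4 = c^4 + (-4*c^3+6*c\<^sup>2-4*c+1) * c + (6*c\<^sup>2-12*c+7) * (real n * (real n - 1) * H 2)
     + (-4*c+6) * (real n * (real n - 1) * (real n - 2) * H 3) + real n * (real n - 1) * (real n - 2) * (real n - 3) * H 4"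
  proof -
    have "spillage_cmoment n k \<phi> 4 = (\<Sum>r\<in>{0..m}. c^4 * P0 r + (-4*c^3+6*c\<^sup>2-4*c+1) * P1 r + (6*c\<^sup>2-12*c+7) * P2 r + (-4*c+6) * P3 r + 1 * P4 r)"
      unfolding cm
    proof (rule sum.cong)
      fix r
      show "(c - M r) ^ 4 * p r = c^4 * P0 r + (-4*c^3+6*c\<^sup>2-4*c+1) * P1 r + (6*c\<^sup>2-12*c+7) * P2 r + (-4*c+6) * P3 r + 1 * P4 r"
        unfolding P0_def P1_def P2_def P3_def P4_def by algebra
    qed simp
    then show ?thesis unfolding lin5 g0 g1 g2 g3 g4 c_def by simp
  qed
  have var: "spillage_var n k \<phi> = real n * H 1 - (real n)\<^sup>2 * (H 1)\<^sup>2 + real n * (real n - 1) * H 2"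
    unfolding spillage_var_def cm2 c_def by algebra
  show ?thesis
    apply (intro conjI impI)
    subgoal using mean m_def c_def by simp
    subgoal by (rule var)
    subgoal unfolding spillage_skew_def var[symmetric] cm3 c_def
      by (rule arg_cong[where f="\<lambda>x. x / _"]) algebra
    subgoal unfolding spillage_kurt_def var[symmetric]
      by (simp add: field_simps cm4 c_def var) algebra
    done
qed

end
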